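(* Let $G=(V,E,\omega)\in\mathcal G$ and let $S$ be a proper subset of $V$. Let $\nu^S$ be the equilibrium measure for $S$, $\kappa_S$ the graph curvature of $S$, and $\kappa_S^+=\max_{i\in V}(\kappa_S)_i$. Then $\nu^S_i\geq(\kappa_S^+)^{-1}$ for all $i\in S$.
   Context: $\mathcal{G}$ is the set of finite, simple, connected, undirected, edge-weighted graphs $G=(V,E,\omega)$ with $V=\{1,\dots,n\}$, $n\geq2$, weights $\omega_{ij}=\omega_{ji}>0$ on edges, $0$ otherwise. $d_i=\sum_j\omega_{ij}$. $\mathcal V$: functions $V\to\mathbb R$. Fixed $r\in[0,1]$; $(\Delta u)_i=d_i^{-r}\sum_j\omega_{ij}(u_i-u_j)$. For a proper subset $S\subsetneq V$, the equilibrium measure $\nu^S$ is the unique $\nu\in\mathcal V$ with $(\Delta\nu)_i=1$ for $i\in S$ and $\nu_i=0$ for $i\in V\setminus S$. Graph curvature (with $q=1$): $(\kappa_S)_i=d_i^{-r}\sum_{j\in V\setminus S}\omega_{ij}$ if $i\in S$, and $(\kappa_S)_i=-d_i^{-r}\sum_{j\in S}\omega_{ij}$ if $i\in V\setminus S$. *)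

theory Defs
  imports Complex_Main
begin

text \<open>A weighted graph on vertex set V = {1..n} is given by n and a weight
function w :: nat => nat => real (weights only matter on V x V).\<close>

definition verts :: "nat \<Rightarrow> nat set" where
  "verts n = {1..n}"

definition in_graph_class :: "nat \<Rightarrow> (nat \<Rightarrow> nat \<Rightarrow> real) \<Rightarrow> bool" where
  "in_graph_class n w \<longleftrightarrow>
     n \<ge> 2 \<and>
     (\<forall>i\<in>verts n. \<forall>j\<in>verts n. w i j = w j i) \<and>
     (\<forall>i\<in>verts n. \<forall>j\<in>verts n. w i j \<ge> 0) \<and>
     (\<forall>i\<in>verts n. w i i = 0) \<and>
     (\<forall>i\<in>verts n. \<forall>j\<in>verts n.
        (\<lambda>a b. a \<in> verts n \<and> b \<in> verts n \<and> w a b > 0)\<^sup>*\<^sup>* i j)"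

definition degree :: "nat \<Rightarrow> (nat \<Rightarrow> nat \<Rightarrow> real) \<Rightarrow> nat \<Rightarrow> real" where
  "degree n w i = (\<Sum>j\<in>verts n. w i j)"

definition graph_laplacian ::
  "nat \<Rightarrow> (nat \<Rightarrow> nat \<Rightarrow> real) \<Rightarrow> real \<Rightarrow> (nat \<Rightarrow> real) \<Rightarrow> nat \<Rightarrow> real" where
  "graph_laplacian n w r u i =
     degree n w i powr (-r) * (\<Sum>j\<in>verts n. w i j * (u i - u j))"

text \<open>Equilibrium measure: values outside V are fixed to 0 so that it is unique.\<close>
definition equilibrium_measure ::
  "nat \<Rightarrow> (nat \<Rightarrow> nat \<Rightarrow> real) \<Rightarrow> real \<Rightarrow> nat set \<Rightarrow> nat \<Rightarrow> real" where
  "equilibrium_measure n w r S =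
     (THE \<nu>. (\<forall>i\<in>S. graph_laplacian n w r \<nu> i = 1) \<and> (\<forall>i. i \<notin> S \<longrightarrow> \<nu> i = 0))"

definition graph_curvature ::
  "nat \<Rightarrow> (nat \<Rightarrow> nat \<Rightarrow> real) \<Rightarrow> real \<Rightarrow> nat set \<Rightarrow> nat \<Rightarrow> real" where
  "graph_curvature n w r S i =
     (if i \<in> S then degree n w i powr (-r) * (\<Sum>j\<in>verts n - S. w i j)
      else - (degree n w i powr (-r) * (\<Sum>j\<in>S. w i j)))"

definition curvature_max ::
  "nat \<Rightarrow> (nat \<Rightarrow> nat \<Rightarrow> real) \<Rightarrow> real \<Rightarrow> nat set \<Rightarrow> real" where
  "curvature_max n w r S = Max (graph_curvature n w r S ` verts n)"

end

theory Submission
  imports Defs "HOL-Library.Function_Algebras"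
begin


lemma (in vector_space) inj_endo_surj:
  assumes fin: "finite E" and lin: "Vector_Spaces.linear scale scale f"
    and into: "f ` span E \<subseteq> span E" and inj: "inj_on f (span E)"
  shows "span E \<subseteq> f ` span E"
proof
  interpret L: Vector_Spaces.linear scale scale f by fact
  obtain B where B: "B \<subseteq> span E" "independent B" "span E \<subseteq> span B" "card B = dim (span E)"
    using basis_exists by blast
  have spB: "span B = span E"
    using B by (metis span_mono span_span subset_antisym)
  have finB: "finite B" "card B \<le> card E"
    using independent_span_bound[OF fin B(2)] B(1) by auto
  have injB: "inj_on f (span B)" using inj spB by simp
  have indf: "independent (f ` B)"
    using L.independent_injective_image[OF B(2) injB] by simp
  have cardf: "card (f ` B) = card B"
    using card_image inj_on_subset[OF injB span_superset] by blast
  have im: "span (f ` B) = f ` span E"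
    using L.span_image spB by simp
  fix v assume v: "v \<in> span E"
  show "v \<in> f ` span E"
  proof (rule ccontr)
    assume nv: "v \<notin> f ` span E"
    then have "v \<notin> span (f ` B)" using im by simp
    then have ind2: "independent (insert v (f ` B))"
      using indf independent_insertI by blast
    have "insert v (f ` B) \<subseteq> span B"
      using v into spB B(1) by auto
    then have "card (insert v (f ` B)) \<le> card B"
      using independent_span_bound[OF finB(1) ind2] by auto
    moreover have "v \<notin> f ` B" using nv B(1) by (metis image_mono in_mono span_superset spB)
    ultimately show False using cardf finB(1) by simp
  qed
qed

interpretation fvs: vector_space "\<lambda>(c::real) (f::nat\<Rightarrow>real). (\<lambda>x. c * f x)"
  by unfold_locales (auto simp: fun_eq_iff algebra_simps)


lemma fun_sum_apply: "(\<Sum>s\<in>A. g s) (x::nat) = (\<Sum>s\<in>A. (g s x::real))"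
  by (induction A rule: infinite_finite_induct) auto

lemma deg_pos:
  assumes G: "in_graph_class n w" and i: "i \<in> verts n"
  shows "degree n w i > 0"
proof -
  have n2: "n \<ge> 2" using G by (simp add: in_graph_class_def)
  define j where "j = (if i = 1 then 2 else (1::nat))"
  have j: "j \<in> verts n" "j \<noteq> i" using n2 i by (auto simp: j_def verts_def)
  have "(\<lambda>a b. a \<in> verts n \<and> b \<in> verts n \<and> w a b > 0)\<^sup>*\<^sup>* i j"
    using G i j by (simp add: in_graph_class_def)
  then obtain k where k: "k \<in> verts n" "w i k > 0"
    using j(2) by (cases rule: converse_rtranclpE) auto
  have nn: "\<forall>j\<in>verts n. w i j \<ge> 0" using G i by (simp add: in_graph_class_def)
  have "w i k \<le> degree n w i"
    unfolding degree_def by (rule member_le_sum) (use k nn in \<open>auto simp: verts_def\<close>)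
  with k show ?thesis by simp
qed

lemma energy_zero:
  fixes u :: "nat \<Rightarrow> real"
  assumes fin: "finite A" and sym: "\<forall>i\<in>A. \<forall>j\<in>A. w i j = w j i"
    and nn: "\<forall>i\<in>A. \<forall>j\<in>A. w i j \<ge> 0"
    and z: "\<forall>i\<in>A. u i * (\<Sum>j\<in>A. w i j * (u i - u j)) = 0"
    and i: "i \<in> A" and j: "j \<in> A" and pos: "w i j > 0"
  shows "u i = u j"
proof -
  define X where "X = (\<Sum>i\<in>A. \<Sum>j\<in>A. w i j * (u i * (u i - u j)))"
  have X0: "X = 0" unfolding X_def using z
    by (simp add: sum_distrib_left algebra_simps)
  have "X = (\<Sum>j\<in>A. \<Sum>i\<in>A. w i j * (u i * (u i - u j)))"
    unfolding X_def by (rule sum.swap)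
  also have "\<dots> = (\<Sum>i\<in>A. \<Sum>j\<in>A. w i j * (u j * (u j - u i)))"
    using sym by (intro sum.cong refl) auto
  finally have "2 * X = (\<Sum>i\<in>A. \<Sum>j\<in>A. w i j * (u i * (u i - u j))) + (\<Sum>i\<in>A. \<Sum>j\<in>A. w i j * (u j * (u j - u i)))"
    unfolding X_def by simp
  also have "\<dots> = (\<Sum>i\<in>A. \<Sum>j\<in>A. w i j * (u i - u j)^2)"
    by (simp add: sum.distrib[symmetric] algebra_simps power2_eq_square)
  finally have S0: "(\<Sum>i\<in>A. \<Sum>j\<in>A. w i j * (u i - u j)^2) = 0" using X0 by simp
  have nn2: "\<And>i. i \<in> A \<Longrightarrow> (\<Sum>j\<in>A. w i j * (u i - u j)^2) \<ge> 0"
    using nn by (intro sum_nonneg) auto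
  have "(\<Sum>j\<in>A. w i j * (u i - u j)^2) = 0"
    using sum_nonneg_eq_0_iff[OF fin, of "\<lambda>i. \<Sum>j\<in>A. w i j * (u i - u j)^2"] S0 nn2 i by auto
  then have "w i j * (u i - u j)^2 = 0"
    using sum_nonneg_eq_0_iff[OF fin, of "\<lambda>j. w i j * (u i - u j)^2"] nn i j by auto
  with pos show ?thesis by simp
qed

lemma uniq:
  fixes u :: "nat \<Rightarrow> real"
  assumes G: "in_graph_class n w" and SV: "S \<subset> verts n"
    and out: "\<forall>i. i \<notin> S \<longrightarrow> u i = 0"
    and lap: "\<forall>i\<in>S. graph_laplacian n w r u i = 0"
  shows "u = 0"
proof -
  have fin: "finite (verts n)" by (simp add: verts_def)
  have sym: "\<forall>i\<in>verts n. \<forall>j\<in>verts n. w i j = w j i"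
    and nn: "\<forall>i\<in>verts n. \<forall>j\<in>verts n. w i j \<ge> 0"
    and con: "\<forall>i\<in>verts n. \<forall>j\<in>verts n.
        (\<lambda>a b. a \<in> verts n \<and> b \<in> verts n \<and> w a b > 0)\<^sup>*\<^sup>* i j"
    using G by (auto simp: in_graph_class_def)
  have z: "\<forall>i\<in>verts n. u i * (\<Sum>j\<in>verts n. w i j * (u i - u j)) = 0"
  proof
    fix i assume i: "i \<in> verts n"
    show "u i * (\<Sum>j\<in>verts n. w i j * (u i - u j)) = 0"
    proof (cases "i \<in> S")
      case True
      have "degree n w i powr (-r) > 0" using deg_pos[OF G i] by simp
      then have "(\<Sum>j\<in>verts n. w i j * (u i - u j)) = 0"
        using lap[rule_format, OF True] by (simp add: graph_laplacian_def)
      then show ?thesis by simp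
    qed (use out in simp)
  qed
  have eq: "u i = u j" if "(\<lambda>a b. a \<in> verts n \<and> b \<in> verts n \<and> w a b > 0)\<^sup>*\<^sup>* i j" for i j
    using that
  proof (induction rule: rtranclp_induct)
    case (step y z)
    then show ?case using energy_zero[OF fin sym nn z, of y z] by auto
  qed simp
  obtain k where k: "k \<in> verts n" "k \<notin> S" using SV by blast
  show ?thesis
  proof
    fix i show "u i = 0 i"
    proof (cases "i \<in> verts n")
      case True
      then show ?thesis using eq[of i k] con k out by auto
    next
      case False then show ?thesis using SV out by auto
    qed
  qed
qed

lemma exist:
  assumes G: "in_graph_class n w" and SV: "S \<subset> verts n"
  shows "\<exists>\<nu>. (\<forall>i\<in>S. graph_laplacian n w r \<nu> i = 1) \<and> (\<forall>i. i \<notin> S \<longrightarrow> \<nu> i = 0)"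
proof -
  have finS: "finite S" using SV finite_subset by (auto simp: verts_def)
  define E where "E = (\<lambda>s. (\<lambda>x. if x = s then 1 else 0::real)) ` S"
  define V where "V = {u::nat\<Rightarrow>real. \<forall>i. i \<notin> S \<longrightarrow> u i = 0}"
  have subV: "fvs.subspace V"
    unfolding fvs.subspace_def V_def by auto
  have spE: "fvs.span E = V"
  proof
    show "fvs.span E \<subseteq> V"
      by (rule fvs.span_minimal[OF _ subV]) (auto simp: E_def V_def)
    show "V \<subseteq> fvs.span E"
    proof
      fix u assume u: "u \<in> V"
      have "u = (\<Sum>s\<in>S. (\<lambda>x. u s * (if x = s then 1 else 0)))"
      proof
        fix x
        have "(\<Sum>s\<in>S. u s * (if x = s then 1 else 0)) = (\<Sum>s\<in>S. if s = x then u x else 0)"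
          by (rule sum.cong) auto
        also have "\<dots> = u x" using u finS by (simp add: sum.delta V_def)
        finally show "u x = (\<Sum>s\<in>S. (\<lambda>x. u s * (if x = s then 1 else 0))) x"
          unfolding fun_sum_apply by simp
      qed
      also have "\<dots> \<in> fvs.span E"
        by (rule fvs.span_sum, rule fvs.span_scale, rule fvs.span_base) (auto simp: E_def)
      finally show "u \<in> fvs.span E" .
    qed
  qed
  define F where "F = (\<lambda>u i. if i \<in> S then graph_laplacian n w r u i else 0::real)"
  have add: "graph_laplacian n w r (x + y) i = graph_laplacian n w r x i + graph_laplacian n w r y i" for x y i
  proof -
    have "(\<Sum>j\<in>verts n. w i j * ((x + y) i - (x + y) j)) = (\<Sum>j\<in>verts n. w i j * (x i - x j)) + (\<Sum>j\<in>verts n. w i j * (y i - y j))"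
      by (subst sum.distrib[symmetric]) (rule sum.cong; simp add: algebra_simps)
    then show ?thesis unfolding graph_laplacian_def by (simp add: distrib_left)
  qed
  have scl: "graph_laplacian n w r (\<lambda>x. c * u x) i = c * graph_laplacian n w r u i" for c u i
    by (simp add: graph_laplacian_def algebra_simps sum_distrib_left)
  have lin: "Vector_Spaces.linear (\<lambda>(c::real) (f::nat\<Rightarrow>real). (\<lambda>x. c * f x)) (\<lambda>(c::real) (f::nat\<Rightarrow>real). (\<lambda>x. c * f x)) F"
    unfolding Vector_Spaces.linear_iff
    using fvs.vector_space_axioms by (auto simp: F_def fun_eq_iff add scl)
  have into: "F ` fvs.span E \<subseteq> fvs.span E" unfolding spE by (auto simp: F_def V_def)
  have inj: "inj_on F (fvs.span E)"
  proof (rule inj_onI)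
    fix x y assume x: "x \<in> fvs.span E" and y: "y \<in> fvs.span E" and eq: "F x = F y"
    have "x - y = 0"
    proof (rule uniq[OF G SV])
      show "\<forall>i. i \<notin> S \<longrightarrow> (x - y) i = 0" using x y spE by (auto simp: V_def)
      show "\<forall>i\<in>S. graph_laplacian n w r (x - y) i = 0"
      proof
        fix i assume i: "i \<in> S"
        have "graph_laplacian n w r x i = graph_laplacian n w r y i"
          using fun_cong[OF eq, of i] i by (simp add: F_def)
        moreover have "graph_laplacian n w r x i = graph_laplacian n w r (x - y) i + graph_laplacian n w r y i"
          using add[of "x - y" y i] by simp
        ultimately show "graph_laplacian n w r (x - y) i = 0" by simp
      qed
    qed
    then show "x = y" by simp
  qed
  have b: "(\<lambda>i. if i \<in> S then 1 else 0::real) \<in> fvs.span E" unfolding spE by (auto simp: V_def)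
  have sur: "fvs.span E \<subseteq> F ` fvs.span E"
    by (rule fvs.inj_endo_surj[OF _ lin into inj]) (simp add: E_def finS)
  obtain \<nu> where \<nu>: "\<nu> \<in> fvs.span E" "(\<lambda>i. if i \<in> S then 1 else 0) = F \<nu>"
    using subsetD[OF sur b] by (rule imageE)
  show ?thesis
  proof (intro exI conjI)
    show "\<forall>i\<in>S. graph_laplacian n w r \<nu> i = 1"
    proof
      fix i assume "i \<in> S"
      then show "graph_laplacian n w r \<nu> i = 1" using fun_cong[OF \<nu>(2), of i] by (simp add: F_def)
    qed
    show "\<forall>i. i \<notin> S \<longrightarrow> \<nu> i = 0" using \<nu>(1) spE by (auto simp: V_def)
  qed
qed

theorem lemma3p8:
  fixes n :: nat and w :: "nat \<Rightarrow> nat \<Rightarrow> real" and r :: real and S :: "nat set"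
  assumes "in_graph_class n w"
    and "0 \<le> r" and "r \<le> 1"
    and "S \<subset> verts n"
  shows "\<forall>i\<in>S. equilibrium_measure n w r S i \<ge> inverse (curvature_max n w r S)"
proof
  fix l assume l: "l \<in> S"
  note G = assms(1) and SV = assms(4)
  let ?P = "\<lambda>\<nu>. (\<forall>i\<in>S. graph_laplacian n w r \<nu> i = 1) \<and> (\<forall>i. i \<notin> S \<longrightarrow> \<nu> i = 0)"
  have ex1: "\<exists>!\<nu>. ?P \<nu>"
  proof (rule ex_ex1I)
    show "\<exists>\<nu>. ?P \<nu>" by (rule exist[OF G SV])
    fix x y assume x: "?P x" and y: "?P y"
    have add: "graph_laplacian n w r (x - y) i = graph_laplacian n w r x i - graph_laplacian n w r y i" for i
    proof -
      have "(\<Sum>j\<in>verts n. w i j * ((x - y) i - (x - y) j)) = (\<Sum>j\<in>verts n. w i j * (x i - x j)) - (\<Sum>j\<in>verts n. w i j * (y i - y j))"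
        by (subst sum_subtractf[symmetric]) (rule sum.cong; simp add: algebra_simps)
      then show ?thesis unfolding graph_laplacian_def by (simp add: right_diff_distrib)
    qed
    have "x - y = 0"
      by (rule uniq[OF G SV, where r=r]) (use x y add in auto)
    then show "x = y" by simp
  qed
  define \<nu> where "\<nu> = equilibrium_measure n w r S"
  have P: "?P \<nu>" unfolding \<nu>_def equilibrium_measure_def using theI'[OF ex1] .
  have finS: "finite S" using SV finite_subset by (auto simp: verts_def)
  have finV: "finite (verts n)" by (simp add: verts_def)
  have ne: "\<nu> ` S \<noteq> {}" using l by blast
  have "Min (\<nu> ` S) \<in> \<nu> ` S" using Min_in[OF finite_imageI[OF finS] ne] .
  then obtain i where i0: "i \<in> S" "\<nu> i = Min (\<nu> ` S)" by force
  have i: "i \<in> S" "\<forall>j\<in>S. \<nu> i \<le> \<nu> j"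
    using i0 finS by auto
  have iv: "i \<in> verts n" using i SV by auto
  have nn: "\<forall>j\<in>verts n. w i j \<ge> 0" using G iv by (simp add: in_graph_class_def)
  define d where "d = degree n w i powr (-r)"
  have dpos: "d > 0" unfolding d_def using deg_pos[OF G iv] by simp
  define \<kappa> where "\<kappa> = graph_curvature n w r S i"
  have \<kappa>: "\<kappa> = d * (\<Sum>j\<in>verts n - S. w i j)"
    using i by (simp add: \<kappa>_def graph_curvature_def d_def)
  have "(\<Sum>j\<in>verts n. w i j * (\<nu> i - \<nu> j)) \<le> (\<Sum>j\<in>verts n. if j \<in> S then 0 else w i j * \<nu> i)"
  proof (rule sum_mono)
    fix j assume j: "j \<in> verts n"
    show "w i j * (\<nu> i - \<nu> j) \<le> (if j \<in> S then 0 else w i j * \<nu> i)"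
    proof (cases "j \<in> S")
      case True
      then have "\<nu> i - \<nu> j \<le> 0" using i by auto
      then show ?thesis using True nn j by (simp add: mult_nonneg_nonpos)
    next
      case False then show ?thesis using P by simp
    qed
  qed
  also have "\<dots> = (\<Sum>j\<in>verts n - S. w i j) * \<nu> i"
    using finV by (simp add: sum.If_cases sum_distrib_right Diff_eq)
  finally have le: "(\<Sum>j\<in>verts n. w i j * (\<nu> i - \<nu> j)) \<le> (\<Sum>j\<in>verts n - S. w i j) * \<nu> i" .
  have "1 = d * (\<Sum>j\<in>verts n. w i j * (\<nu> i - \<nu> j))"
    using P i by (simp add: graph_laplacian_def d_def)
  also have "\<dots> \<le> d * ((\<Sum>j\<in>verts n - S. w i j) * \<nu> i)"
    using le dpos by (simp add: mult_left_mono)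
  finally have one: "1 \<le> \<kappa> * \<nu> i" using \<kappa> by (simp add: mult.assoc)
  have k0: "\<kappa> \<ge> 0" unfolding \<kappa> using dpos nn by (intro mult_nonneg_nonneg sum_nonneg) auto
  have kpos: "\<kappa> > 0"
  proof (rule ccontr)
    assume "\<not> \<kappa> > 0" then have "\<kappa> = 0" using k0 by simp
    then show False using one by simp
  qed
  have kmax: "\<kappa> \<le> curvature_max n w r S"
    unfolding curvature_max_def \<kappa>_def using finV iv by (intro Max_ge) auto
  have "inverse (curvature_max n w r S) \<le> inverse \<kappa>"
    using kmax kpos by (simp add: le_imp_inverse_le)
  also have "inverse \<kappa> \<le> \<nu> i"
    using one kpos by (simp add: field_simps inverse_eq_divide)
  also have "\<nu> i \<le> \<nu> l" using i l by auto
  finally show "equilibrium_measure n w r S l \<ge> inverse (curvature_max n w r S)"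
    unfolding \<nu>_def .
qed

end
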